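(* Let $\nu\in\mathbb{S}^{2n}$, $d\in\mathbb{R}$, $\Pi^+_{\nu,d}=\{\xi\in\mathbb{R}^{2n+1}:\langle\xi,\nu\rangle>d\}$, $p\ge2$ (in fact any $p>1$) and $1\le i\le n$. Then for every real-valued $u\in C_0^\infty(\Pi^+_{\nu,d})$, \[ \Bigl(\frac{p-1}{p}\Bigr)^p\int_{\Pi^+_{\nu,d}}\frac{|\langle X_i(\xi),\nu\rangle|^p}{\operatorname{dist}(\xi,\partial\Pi^+_{\nu,d})^p}|u|^p\,d\xi\le\int_{\Pi^+_{\nu,d}}|X_iu|^p\,d\xi, \] and the same inequality holds with $X_i$ replaced by $Y_i$ on both sides.
   Context: Points of $\mathbb{R}^{2n+1}$ are written $\xi=(x,y,t)$, $x,y\in\mathbb{R}^n$, $t\in\mathbb{R}$. For $1\le i\le n$, $X_i=\partial_{x_i}+2y_i\partial_t$ and $Y_i=\partial_{y_i}-2x_i\partial_t$ (the left-invariant horizontal vector fields of the Heisenberg group $\mathbb{H}^n$), identified with their coefficient vectors in $\mathbb{R}^{2n+1}$; $\langle\cdot,\cdot\rangle$ is the Euclidean inner product, $\mathbb{S}^{2n}$ the Euclidean unit sphere, $\operatorname{dist}$ the Euclidean distance. *)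

theory Defs
  imports "HOL-Analysis.Analysis"
begin

text \<open>Points of R^(2n+1) are triples (x, y, t) with x, y :: real^'n and t :: real,
  where n = CARD('n). The product type carries the Euclidean inner product/norm/Lebesgue measure.\<close>

type_synonym 'n heis = "(real ^ 'n) \<times> (real ^ 'n) \<times> real"

text \<open>Coefficient vectors of X_i = d/dx_i + 2 y_i d/dt and Y_i = d/dy_i - 2 x_i d/dt.\<close>
definition Xvf :: "'n::finite \<Rightarrow> 'n heis \<Rightarrow> 'n heis" where
  "Xvf i \<xi> = (axis i 1, 0, 2 * (fst (snd \<xi>)) $ i)"

definition Yvf :: "'n::finite \<Rightarrow> 'n heis \<Rightarrow> 'n heis" where
  "Yvf i \<xi> = (0, axis i 1, - 2 * (fst \<xi>) $ i)"

definition vf_apply :: "('a::real_normed_vector \<Rightarrow> 'a) \<Rightarrow> ('a \<Rightarrow> real) \<Rightarrow> 'a \<Rightarrow> real" where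
  "vf_apply V u \<xi> = frechet_derivative u (at \<xi>) (V \<xi>)"

fun Ck :: "nat \<Rightarrow> ('a::real_normed_vector \<Rightarrow> real) \<Rightarrow> bool" where
  "Ck 0 f = continuous_on UNIV f"
| "Ck (Suc k) f = (f differentiable_on UNIV \<and> (\<forall>v. Ck k (\<lambda>x. frechet_derivative f (at x) v)))"

definition smooth :: "('a::real_normed_vector \<Rightarrow> real) \<Rightarrow> bool" where
  "smooth f = (\<forall>k. Ck k f)"

definition C0_inf :: "'a::real_normed_vector set \<Rightarrow> ('a \<Rightarrow> real) set" where
  "C0_inf U = {u. smooth u \<and> compact (closure {x. u x \<noteq> 0}) \<and> closure {x. u x \<noteq> 0} \<subseteq> U}"

definition halfspace :: "'a::real_inner \<Rightarrow> real \<Rightarrow> 'a set" where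
  "halfspace \<nu> d = {\<xi>. inner \<xi> \<nu> > d}"

end

theory Submission
  imports Defs
begin

lemma abs_powr_deriv:
  fixes p z :: real assumes p: "p > 1"
  shows "((\<lambda>z. \<bar>z\<bar> powr p) has_real_derivative (p * \<bar>z\<bar> powr (p-1) * sgn z)) (at z)"
proof (cases "z = 0")
  case True
  have "((\<lambda>h. (\<bar>h\<bar> powr p - \<bar>0\<bar> powr p) / h) \<longlongrightarrow> 0) (at 0)"
  proof (rule tendsto_sandwich[where f="\<lambda>h. - (\<bar>h\<bar> powr (p-1))" and h="\<lambda>h. \<bar>h\<bar> powr (p-1)"])
    show "\<forall>\<^sub>F h in at 0. - (\<bar>h\<bar> powr (p-1)) \<le> (\<bar>h\<bar> powr p - \<bar>0\<bar> powr p) / h"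
         "\<forall>\<^sub>F h in at 0. (\<bar>h\<bar> powr p - \<bar>0\<bar> powr p) / h \<le> \<bar>h\<bar> powr (p-1)"
    proof -
      have eq0: "\<bar>(\<bar>h\<bar> powr p - \<bar>0\<bar> powr p) / h\<bar> = \<bar>h\<bar> powr (p-1)" if "h \<noteq> 0" for h :: real
        using that by (simp add: abs_divide powr_diff)
      have eq: "- (\<bar>h\<bar> powr (p-1)) \<le> (\<bar>h\<bar> powr p - \<bar>0\<bar> powr p) / h \<and> (\<bar>h\<bar> powr p - \<bar>0\<bar> powr p) / h \<le> \<bar>h\<bar> powr (p-1)" if "h \<noteq> 0" for h :: real
        using eq0[OF that] by linarith
      show "\<forall>\<^sub>F h in at 0. - (\<bar>h\<bar> powr (p-1)) \<le> (\<bar>h\<bar> powr p - \<bar>0\<bar> powr p) / h"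
        unfolding eventually_at_filter
        by (intro always_eventually allI impI) (use eq in fastforce)
      show "\<forall>\<^sub>F h in at 0. (\<bar>h\<bar> powr p - \<bar>0\<bar> powr p) / h \<le> \<bar>h\<bar> powr (p-1)"
        unfolding eventually_at_filter
        by (intro always_eventually allI impI) (use eq in fastforce)
    qed
    have "((\<lambda>h::real. \<bar>h\<bar> powr (p-1)) \<longlongrightarrow> \<bar>0\<bar> powr (p-1)) (at 0)"
      using p by (intro tendsto_intros) auto
    then show "((\<lambda>h::real. \<bar>h\<bar> powr (p-1)) \<longlongrightarrow> 0) (at 0)" by simp
    from tendsto_minus[OF this] show "((\<lambda>h::real. - (\<bar>h\<bar> powr (p-1))) \<longlongrightarrow> 0) (at 0)" by simp
  qed
  then show ?thesis using True
    by (simp add: has_field_derivative_iff)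
next
  case False
  show ?thesis
  proof (cases "z > 0")
    case True
    have "eventually (\<lambda>x. x \<in> {0<..}) (nhds z)"
      by (rule eventually_nhds_in_open) (use True in auto)
    then have ev: "eventually (\<lambda>x. \<bar>x\<bar> powr p = x powr p) (nhds z)"
      by eventually_elim simp
    have d: "((\<lambda>x. x powr p) has_real_derivative p * \<bar>z\<bar> powr (p-1) * sgn z) (at z)"
      using True has_real_derivative_powr[OF True, of p] by simp
    show ?thesis
      by (subst DERIV_cong_ev[OF refl ev refl]) (rule d)
  next
    case neg: False
    with False have z: "z < 0" by simp
    have "eventually (\<lambda>x. x \<in> {..<0}) (nhds z)"
      by (rule eventually_nhds_in_open) (use z in auto)
    then have ev: "eventually (\<lambda>x. \<bar>x\<bar> powr p = (-x) powr p) (nhds z)"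
      by eventually_elim simp
    have "((\<lambda>x. x powr p) has_real_derivative p * (-z) powr (p-1)) (at (-z))"
      using z by (intro has_real_derivative_powr) auto
    from DERIV_chain2[OF this DERIV_minus[OF DERIV_ident]]
    have "((\<lambda>x. (-x) powr p) has_real_derivative p * (-z) powr (p-1) * (-1)) (at z)" by simp
    then have d: "((\<lambda>x. (-x) powr p) has_real_derivative p * \<bar>z\<bar> powr (p-1) * sgn z) (at z)"
      using z by simp
    show ?thesis
      by (subst DERIV_cong_ev[OF refl ev refl]) (rule d)
  qed
qed

lemma young_aux:
  fixes a y p t :: real
  assumes a: "a \<ge> 0" and y: "y \<ge> 0" and p: "p > 1" and t: "t > 0"
  shows "p * (a powr (p-1) * y) \<le> (p-1) * t * a powr p + t powr (1-p) * y powr p"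
proof (cases "a = 0 \<or> y = 0")
  case True
  then have "p * (a powr (p-1) * y) = 0" by auto
  moreover have "0 \<le> (p-1) * t * a powr p + t powr (1-p) * y powr p"
    using p t by (intro add_nonneg_nonneg mult_nonneg_nonneg) auto
  ultimately show ?thesis by linarith
next
  case False
  then have a0: "a > 0" and y0: "y > 0" using a y by auto
  define A where "A = t * a powr p"
  define B where "B = t powr (1-p) * y powr p"
  have A0: "A > 0" and B0: "B > 0" using a0 y0 t by (auto simp: A_def B_def)
  have Y: "A powr ((p-1)/p) * B powr (1/p) \<le> (p-1)/p * A + 1/p * B"
    using Youngs_inequality_0[of "(p-1)/p" "1/p" A B] A0 B0 p by (simp add: diff_divide_distrib)
  have e1: "A powr ((p-1)/p) = t powr ((p-1)/p) * a powr (p-1)"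
    unfolding A_def using t a0 p by (simp add: powr_mult powr_powr)
  have e2: "B powr (1/p) = t powr ((1-p)/p) * y"
    unfolding B_def using t y0 p by (simp add: powr_mult powr_powr)
  have e3: "t powr ((p-1)/p) * t powr ((1-p)/p) = 1"
    using t by (simp add: powr_add[symmetric] diff_divide_distrib)
  have "A powr ((p-1)/p) * B powr (1/p) = a powr (p-1) * y"
    unfolding e1 e2 using e3 by (metis mult.assoc mult.commute mult.left_neutral)
  with Y have "a powr (p-1) * y \<le> (p-1)/p * A + 1/p * B" by simp
  then have "p * (a powr (p-1) * y) \<le> p * ((p-1)/p * A + 1/p * B)"
    using p by (simp add: mult_left_mono)
  also have "\<dots> = (p-1) * A + B" using p by (simp add: field_simps)
  finally show ?thesis by (simp add: A_def B_def mult.assoc)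
qed

lemma hardy_core:
  fixes f f' :: "real \<Rightarrow> real" and p c e0 a b :: real
  assumes p: "p > 1" and ab: "a \<le> b"
    and gpos: "\<And>s. s \<in> {a..b} \<Longrightarrow> 0 < e0 + c * s"
    and fa: "f a = 0" and fb: "f b = 0"
    and fd: "\<And>s. (f has_real_derivative f' s) (at s)"
    and fc: "continuous_on {a..b} f'"
  shows "((p-1)/p) powr p * integral {a..b} (\<lambda>s. \<bar>c\<bar> powr p / (e0 + c * s) powr p * \<bar>f s\<bar> powr p)
           \<le> integral {a..b} (\<lambda>s. \<bar>f' s\<bar> powr p)"
proof -
  define g where "g s = e0 + c * s" for s
  define t where "t = (p-1)/p"
  have t0: "t > 0" and t1: "t < 1" using p by (auto simp: t_def)
  define A where "A s = \<bar>c\<bar> powr p / g s powr p * \<bar>f s\<bar> powr p" for s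
  define B where "B s = \<bar>f' s\<bar> powr p" for s
  define F where "F s = \<bar>f s\<bar> powr p * g s powr (1-p)" for s
  define F' where "F' s = (p * \<bar>f s\<bar> powr (p-1) * sgn (f s) * f' s) * g s powr (1-p)
      + ((1-p) * g s powr (1 - p - of_nat 1) * c) * \<bar>f s\<bar> powr p" for s
  define k where "k = sgn c * \<bar>c\<bar> powr (p-1)"
  have gd: "(g has_real_derivative c) (at s)" for s
    unfolding g_def[abs_def] by (auto intro!: derivative_eq_intros)
  have dF: "(F has_real_derivative F' s) (at s)" if s: "s \<in> {a..b}" for s
  proof -
    have "g s > 0" using gpos[OF s] by (simp add: g_def)
    from DERIV_mult[OF DERIV_chain2[OF abs_powr_deriv[OF p] fd] DERIV_fun_powr[OF gd this, where r="1-p"]]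
    show ?thesis unfolding F_def[abs_def] F'_def by simp
  qed
  have Fint: "(F' has_integral (F b - F a)) {a..b}"
    using ab dF by (intro fundamental_theorem_of_calculus)
       (auto simp: has_real_derivative_iff_has_vector_derivative[symmetric] intro: has_field_derivative_at_within)
  then have Fint0: "(F' has_integral 0) {a..b}" using fa fb p by (simp add: F_def)
  have fcont: "continuous_on {a..b} f"
    using fd by (meson DERIV_isCont continuous_at_imp_continuous_on)
  have gcont: "continuous_on {a..b} g" unfolding g_def[abs_def] by (intro continuous_intros)
  have c1: "continuous_on {a..b} (\<lambda>s. \<bar>f s\<bar> powr p)"
    using p by (intro continuous_on_powr' continuous_intros fcont) auto
  have c2: "continuous_on {a..b} (\<lambda>s. g s powr p)"
    using gpos by (intro continuous_on_powr continuous_intros gcont) (force simp: g_def)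
  have Acont: "continuous_on {a..b} A"
    unfolding A_def[abs_def] using gpos
    by (intro continuous_on_mult continuous_on_divide c1 c2 continuous_on_const) (force simp: g_def)
  have Bcont: "continuous_on {a..b} B"
    unfolding B_def[abs_def] using p
    by (intro continuous_intros continuous_on_powr' fc) auto
  have Aint: "A integrable_on {a..b}" using Acont integrable_continuous_interval by blast
  have Bint: "B integrable_on {a..b}" using Bcont integrable_continuous_interval by blast
  have pw: "(p-1)*(1-t) * A s \<le> t powr (1-p) * B s - k * F' s" if s: "s \<in> {a..b}" for s
  proof -
    define x where "x = \<bar>f s\<bar>"
    define y where "y = \<bar>f' s\<bar>"
    define G where "G = g s"
    define C where "C = \<bar>c\<bar>"
    have G0: "G > 0" using gpos[OF s] by (simp add: G_def g_def)
    have x0: "x \<ge> 0" and y0: "y \<ge> 0" and C0: "C \<ge> 0" by (auto simp: x_def y_def C_def)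
    define al where "al = C * x / G"
    have al0: "al \<ge> 0" using x0 C0 G0 by (simp add: al_def)
    have kc: "k * c = C powr p"
    proof (cases "c = 0")
      case True then show ?thesis by (simp add: k_def C_def)
    next
      case False
      then have "C > 0" by (simp add: C_def)
      then have "C powr p = C powr (p-1) * C" by (simp add: powr_diff)
      moreover have "sgn c * c = C" by (simp add: C_def abs_sgn mult.commute)
      ultimately show ?thesis unfolding k_def C_def by (simp add: mult_ac)
    qed
    have alp: "al powr p = A s"
      unfolding al_def A_def using G0 by (simp add: powr_mult powr_divide C_def x_def G_def mult_ac)
    have t2: "k * ((1-p) * g s powr (1 - p - of_nat 1) * c) * \<bar>f s\<bar> powr p = -(p-1) * A s"
    proof -
      have "g s powr (1 - p - of_nat 1) = 1 / G powr p"
        by (simp add: G_def powr_minus_divide[symmetric])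
      then show ?thesis using kc unfolding A_def C_def G_def by (simp add: field_simps)
    qed
    have t1: "k * ((p * \<bar>f s\<bar> powr (p-1) * sgn (f s) * f' s) * g s powr (1-p))
        \<le> p * (al powr (p-1) * y)"
    proof -
      define Z where "Z = (p * \<bar>f s\<bar> powr (p-1) * sgn (f s) * f' s) * g s powr (1-p)"
      have kabs: "\<bar>k\<bar> \<le> C powr (p-1)"
      proof -
        have "\<bar>k\<bar> = \<bar>sgn c\<bar> * C powr (p-1)" by (simp add: k_def abs_mult C_def)
        also have "\<dots> \<le> 1 * C powr (p-1)" by (intro mult_right_mono) (auto simp: abs_sgn_eq)
        finally show ?thesis by simp
      qed
      have Zabs: "\<bar>Z\<bar> \<le> p * x powr (p-1) * y * G powr (1-p)"
      proof -
        have "\<bar>Z\<bar> = p * x powr (p-1) * \<bar>sgn (f s)\<bar> * y * G powr (1-p)"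
          unfolding Z_def abs_mult using p G0 by (simp add: x_def y_def G_def)
        also have "\<dots> \<le> p * x powr (p-1) * 1 * y * G powr (1-p)"
          using p y0 G0 by (intro mult_right_mono mult_left_mono) (auto simp: abs_sgn_eq)
        finally show ?thesis by simp
      qed
      have "k * Z \<le> \<bar>k\<bar> * \<bar>Z\<bar>" by (simp add: abs_mult[symmetric])
      also have "\<dots> \<le> C powr (p-1) * (p * x powr (p-1) * y * G powr (1-p))"
        using kabs Zabs by (intro mult_mono) auto
      also have "\<dots> = p * (al powr (p-1) * y)"
      proof -
        have "G powr (1 - p) * G powr (p - 1) = 1" using G0 by (simp add: powr_add[symmetric])
        then show ?thesis
          unfolding al_def using G0 by (simp add: powr_mult powr_divide powr_minus_divide[symmetric] field_simps)
      qed
      finally show ?thesis unfolding Z_def .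
    qed
    have Y: "p * (al powr (p-1) * y) \<le> (p-1) * t * al powr p + t powr (1-p) * y powr p"
      by (rule young_aux[OF al0 y0 p t0])
    have "k * F' s = k * ((p * \<bar>f s\<bar> powr (p-1) * sgn (f s) * f' s) * g s powr (1-p))
        + k * ((1-p) * g s powr (1 - p - of_nat 1) * c) * \<bar>f s\<bar> powr p"
      by (simp add: F'_def algebra_simps)
    then show ?thesis using t1 t2 Y alp unfolding B_def y_def by (simp add: algebra_simps)
  qed
  have "integral {a..b} (\<lambda>s. (p-1)*(1-t) * A s) \<le> integral {a..b} (\<lambda>s. t powr (1-p) * B s - k * F' s)"
    using pw Aint Bint Fint0 by (intro integral_le integrable_diff integrable_on_mult_right) (auto simp: has_integral_integrable)
  also have "\<dots> = t powr (1-p) * integral {a..b} B"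
  proof -
    have "integral {a..b} (\<lambda>s. t powr (1-p) * B s - k * F' s)
        = integral {a..b} (\<lambda>s. t powr (1-p) * B s) - integral {a..b} (\<lambda>s. k * F' s)"
      using Bint Fint0 by (intro integral_diff integrable_on_mult_right) (auto simp: has_integral_integrable)
    moreover have "integral {a..b} (\<lambda>s. k * F' s) = 0"
    proof -
      have "((\<lambda>s. k * F' s) has_integral 0) {a..b}" using has_integral_mult_right[OF Fint0, of k] by simp
      then show ?thesis by (rule integral_unique)
    qed
    ultimately show ?thesis by simp
  qed
  finally have "(p-1)*(1-t) * integral {a..b} A \<le> t powr (1-p) * integral {a..b} B"
    by simp
  then have "t powr (p-1) * ((p-1)*(1-t) * integral {a..b} A) \<le> t powr (p-1) * (t powr (1-p) * integral {a..b} B)"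
    using t0 by (intro mult_left_mono) auto
  moreover have "t powr (p-1) * (t powr (1-p) * integral {a..b} B) = integral {a..b} B"
    using t0 by (simp add: powr_add[symmetric])
  moreover have "t powr (p-1) * ((p-1)*(1-t) * integral {a..b} A) = t powr p * integral {a..b} A"
  proof -
    have "(p-1)*(1-t) = t" using p by (simp add: t_def field_simps)
    moreover have "t powr (p - 1) * t = t powr p" using t0 by (simp add: powr_diff)
    ultimately show ?thesis by (simp add: mult.assoc)
  qed
  ultimately have "t powr p * integral {a..b} A \<le> integral {a..b} B" by simp
  then show ?thesis unfolding t_def A_def B_def g_def .
qed

lemma hardy_line:
  fixes f f' :: "real \<Rightarrow> real" and p c e0 a b :: real
  assumes p: "p > 1" and ab: "a \<le> b"
    and gpos: "\<And>s. s \<in> {a..b} \<Longrightarrow> 0 < e0 + c * s"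
    and fz: "\<And>s. s \<le> a \<or> b \<le> s \<Longrightarrow> f s = 0"
    and fd: "\<And>s. (f has_real_derivative f' s) (at s)"
    and fc: "continuous_on UNIV f'"
  shows "ennreal (((p-1)/p) powr p) * (\<integral>\<^sup>+s. ennreal (indicator {s. 0 < e0 + c * s} s *
            (\<bar>c\<bar> powr p / (e0 + c * s) powr p * \<bar>f s\<bar> powr p)) \<partial>lborel)
         \<le> (\<integral>\<^sup>+s. ennreal (indicator {s. 0 < e0 + c * s} s * \<bar>f' s\<bar> powr p) \<partial>lborel)"
proof -
  define A where "A s = \<bar>c\<bar> powr p / (e0 + c * s) powr p * \<bar>f s\<bar> powr p" for s
  define B where "B s = \<bar>f' s\<bar> powr p" for s
  have fcont: "continuous_on {a..b} f"
    using fd by (meson DERIV_isCont continuous_at_imp_continuous_on)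
  have c1: "continuous_on {a..b} (\<lambda>s. \<bar>f s\<bar> powr p)"
    using p by (intro continuous_on_powr' continuous_intros fcont) auto
  have c2: "continuous_on {a..b} (\<lambda>s. (e0 + c * s) powr p)"
    using gpos by (intro continuous_on_powr continuous_intros) force+
  have Acont: "continuous_on {a..b} A"
    unfolding A_def[abs_def] using gpos
    by (intro continuous_on_mult continuous_on_divide c1 c2 continuous_on_const) force
  have Bcont: "continuous_on {a..b} B"
    unfolding B_def[abs_def] using p
    by (intro continuous_on_powr' continuous_intros continuous_on_subset[OF fc]) auto
  have Aint: "(A has_integral integral {a..b} A) {a..b}"
    using Acont integrable_continuous_interval by blast
  have Bint: "(B has_integral integral {a..b} B) {a..b}"
    using Bcont integrable_continuous_interval by blast
  have A0: "A s \<ge> 0" for s by (simp add: A_def)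
  have B0: "B s \<ge> 0" for s by (simp add: B_def)
  have IA0: "integral {a..b} A \<ge> 0" using Aint A0 by (intro integral_nonneg) (auto simp: has_integral_integrable)
  have eqA: "indicator {s. 0 < e0 + c * s} s * A s = indicator {a..b} s * A s" for s
  proof (cases "s \<in> {a..b}")
    case True then show ?thesis using gpos[OF True] by simp
  next
    case False
    then have "s \<le> a \<or> b \<le> s" by auto
    then have "f s = 0" by (rule fz)
    then show ?thesis using p by (simp add: A_def)
  qed
  have L: "(\<integral>\<^sup>+s. ennreal (indicator {s. 0 < e0 + c * s} s * A s) \<partial>lborel) = ennreal (integral {a..b} A)"
  proof -
    have "(\<integral>\<^sup>+s. ennreal (indicator {s. 0 < e0 + c * s} s * A s) \<partial>lborel)
        = (\<integral>\<^sup>+s. ennreal (indicator {a..b} s * A s) \<partial>lborel)" by (simp only: eqA)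
    also have "\<dots> = ennreal (integral {a..b} A)"
      by (rule nn_integral_has_integral_lebesgue[OF _ Aint]) (rule A0)
    finally show ?thesis .
  qed
  have R: "ennreal (integral {a..b} B) \<le> (\<integral>\<^sup>+s. ennreal (indicator {s. 0 < e0 + c * s} s * B s) \<partial>lborel)"
  proof -
    have "ennreal (integral {a..b} B) = (\<integral>\<^sup>+s. ennreal (indicator {a..b} s * B s) \<partial>lborel)"
      by (rule nn_integral_has_integral_lebesgue[OF _ Bint, symmetric]) (rule B0)
    also have "\<dots> \<le> (\<integral>\<^sup>+s. ennreal (indicator {s. 0 < e0 + c * s} s * B s) \<partial>lborel)"
      using gpos B0 by (intro nn_integral_mono ennreal_leI) (auto simp: indicator_def)
    finally show ?thesis .
  qed
  have core: "((p-1)/p) powr p * integral {a..b} A \<le> integral {a..b} B"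
    unfolding A_def B_def
    by (rule hardy_core[OF p ab gpos _ _ fd continuous_on_subset[OF fc]]) (auto intro: fz)
  have "ennreal (((p-1)/p) powr p) * ennreal (integral {a..b} A) = ennreal (((p-1)/p) powr p * integral {a..b} A)"
    using IA0 by (simp add: ennreal_mult)
  also have "\<dots> \<le> ennreal (integral {a..b} B)" using core by (rule ennreal_leI)
  finally show ?thesis using L R unfolding A_def B_def by simp
qed

lemma nn_integral_translate:
  fixes G :: "'a::euclidean_space \<Rightarrow> ennreal" and c :: 'a
  assumes [measurable]: "G \<in> borel_measurable borel"
  shows "(\<integral>\<^sup>+z. G (z + c) \<partial>lborel) = (\<integral>\<^sup>+z. G z \<partial>lborel)"
proof -
  have "(\<integral>\<^sup>+z. G z \<partial>lborel) = (\<integral>\<^sup>+z. G z \<partial>(distr lborel borel ((+) c)))"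
    by (simp add: lborel_distr_plus)
  also have "\<dots> = (\<integral>\<^sup>+z. G (c + z) \<partial>lborel)"
    by (subst nn_integral_distr) auto
  finally show ?thesis by (simp add: add.commute)
qed

lemma slab_fubini:
  fixes F :: "'a::euclidean_space \<Rightarrow> ennreal" and a bv :: 'a
  assumes F[measurable]: "F \<in> borel_measurable borel" and ab: "a \<bullet> bv = 1"
  shows "(\<integral>\<^sup>+z. F z \<partial>lborel)
       = (\<integral>\<^sup>+z. indicator {z. z \<bullet> bv \<in> {0..<1}} z * (\<integral>\<^sup>+s. F (z + s *\<^sub>R a) \<partial>lborel) \<partial>lborel)"
proof -
  have one: "(\<integral>\<^sup>+s. indicator {r. z \<bullet> bv - r \<in> {0..<1}} s \<partial>lborel) = 1" for z :: 'a
  proof -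
    have "{s. z \<bullet> bv - s \<in> {0..<1}} = {z \<bullet> bv - 1 <.. z \<bullet> bv}" by auto
    then show ?thesis by simp
  qed
  have "(\<integral>\<^sup>+z. F z \<partial>lborel) = (\<integral>\<^sup>+z. (\<integral>\<^sup>+s. F z * indicator {r. z \<bullet> bv - r \<in> {0..<1}} s \<partial>lborel) \<partial>lborel)"
  proof -
    have "(\<integral>\<^sup>+z. F z \<partial>lborel) = (\<integral>\<^sup>+z. F z * (\<integral>\<^sup>+s. indicator {r. z \<bullet> bv - r \<in> {0..<1}} s \<partial>lborel) \<partial>lborel)"
      by (simp only: one mult_1_right)
    also have "\<dots> = (\<integral>\<^sup>+z. (\<integral>\<^sup>+s. F z * indicator {r. z \<bullet> bv - r \<in> {0..<1}} s \<partial>lborel) \<partial>lborel)"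
      by (intro nn_integral_cong nn_integral_cmult[symmetric]) measurable
    finally show ?thesis .
  qed
  also have "\<dots> = (\<integral>\<^sup>+s. (\<integral>\<^sup>+z. F z * indicator {r. z \<bullet> bv - r \<in> {0..<1}} s \<partial>lborel) \<partial>lborel)"
    by (rule lborel_pair.Fubini'[symmetric]) measurable
  also have "\<dots> = (\<integral>\<^sup>+s. (\<integral>\<^sup>+z. F (z + s *\<^sub>R a) * indicator {z. z \<bullet> bv \<in> {0..<1}} z \<partial>lborel) \<partial>lborel)"
  proof (rule nn_integral_cong)
    fix s :: real
    have "(\<integral>\<^sup>+z. F z * indicator {r. z \<bullet> bv - r \<in> {0..<1}} s \<partial>lborel)
        = (\<integral>\<^sup>+z. F (z + s *\<^sub>R a) * indicator {r. (z + s *\<^sub>R a) \<bullet> bv - r \<in> {0..<1}} s \<partial>lborel)"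
    proof -
      have m: "(\<lambda>z. F z * indicator {r. z \<bullet> bv - r \<in> {0..<1}} s) \<in> borel_measurable borel" by measurable
      show ?thesis using nn_integral_translate[OF m, of "s *\<^sub>R a"] by simp
    qed
    also have "\<dots> = (\<integral>\<^sup>+z. F (z + s *\<^sub>R a) * indicator {z. z \<bullet> bv \<in> {0..<1}} z \<partial>lborel)"
      using ab by (intro nn_integral_cong) (simp add: inner_add_left indicator_def)
    finally show "(\<integral>\<^sup>+z. F z * indicator {r. z \<bullet> bv - r \<in> {0..<1}} s \<partial>lborel)
        = (\<integral>\<^sup>+z. F (z + s *\<^sub>R a) * indicator {z. z \<bullet> bv \<in> {0..<1}} z \<partial>lborel)" .
  qed
  also have "\<dots> = (\<integral>\<^sup>+z. (\<integral>\<^sup>+s. F (z + s *\<^sub>R a) * indicator {z. z \<bullet> bv \<in> {0..<1}} z \<partial>lborel) \<partial>lborel)"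
    by (rule lborel_pair.Fubini') measurable
  also have "\<dots> = (\<integral>\<^sup>+z. indicator {z. z \<bullet> bv \<in> {0..<1}} z * (\<integral>\<^sup>+s. F (z + s *\<^sub>R a) \<partial>lborel) \<partial>lborel)"
    by (simp add: nn_integral_multc mult.commute)
  finally show ?thesis .
qed

lemma nn_integral_prod_lborel:
  fixes G :: "('a::euclidean_space \<times> 'b::euclidean_space) \<Rightarrow> ennreal"
  assumes [measurable]: "G \<in> borel_measurable borel"
  shows "(\<integral>\<^sup>+\<xi>. G \<xi> \<partial>lborel) = (\<integral>\<^sup>+x. (\<integral>\<^sup>+w. G (x, w) \<partial>lborel) \<partial>lborel)"
proof -
  have "(\<integral>\<^sup>+\<xi>. G \<xi> \<partial>lborel) = (\<integral>\<^sup>+\<xi>. G \<xi> \<partial>(lborel \<Otimes>\<^sub>M lborel))"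
    by (simp only: lborel_prod)
  also have "\<dots> = (\<integral>\<^sup>+x. (\<integral>\<^sup>+w. G (x, w) \<partial>lborel) \<partial>lborel)"
    by (rule lborel.nn_integral_fst[symmetric]) (unfold lborel_prod, measurable)
  finally show ?thesis .
qed

lemma Yvf_cont: "continuous_on UNIV (Yvf i)"
  unfolding Yvf_def by (intro continuous_intros)

lemma Xvf_cont: "continuous_on UNIV (Xvf i)"
  unfolding Xvf_def by (intro continuous_intros)

lemma Yvf_meas[measurable]: "Yvf i \<in> borel_measurable borel"
  by (rule borel_measurable_continuous_onI[OF Yvf_cont])

lemma Xvf_meas[measurable]: "Xvf i \<in> borel_measurable borel"
  by (rule borel_measurable_continuous_onI[OF Xvf_cont])

lemma vec_nth_meas[measurable]: "(\<lambda>x::real^'n. x $ i) \<in> borel_measurable borel"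
  by (rule borel_measurable_continuous_onI) (intro continuous_intros)

lemma line_int_meas[measurable]:
  fixes G :: "'a::euclidean_space \<Rightarrow> ennreal" and V :: "'a \<Rightarrow> 'a"
  assumes [measurable]: "G \<in> borel_measurable borel" "V \<in> borel_measurable borel"
  shows "(\<lambda>x. \<integral>\<^sup>+s. G (x + s *\<^sub>R V x) \<partial>lborel) \<in> borel_measurable borel"
proof -
  have "(\<lambda>(x, s). G (x + s *\<^sub>R V x)) \<in> borel_measurable (borel \<Otimes>\<^sub>M lborel)"
    by measurable
  then show ?thesis by (rule lborel.borel_measurable_nn_integral)
qed

lemma coord_set_meas:
  fixes h :: "'a::topological_space \<Rightarrow> real"
  assumes "continuous_on UNIV h"
  shows "{\<xi>. h \<xi> \<in> {0..<1}} \<in> sets borel"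
proof -
  have "h \<in> borel_measurable borel" using assms by (rule borel_measurable_continuous_onI)
  from measurable_sets[OF this, of "{0..<1}"] show ?thesis by (simp add: vimage_def)
qed

lemma heis_Y_slab:
  fixes G :: "'n::finite heis \<Rightarrow> ennreal" and i :: 'n
  assumes G[measurable]: "G \<in> borel_measurable borel"
  shows "(\<integral>\<^sup>+\<xi>. G \<xi> \<partial>lborel)
    = (\<integral>\<^sup>+\<xi>. indicator {\<xi>. fst (snd \<xi>) $ i \<in> {0..<1}} \<xi> * (\<integral>\<^sup>+s. G (\<xi> + s *\<^sub>R Yvf i \<xi>) \<partial>lborel) \<partial>lborel)"
proof -
  define bv :: "(real ^ 'n) \<times> real" where "bv = (axis i 1, 0)"
  have "(\<integral>\<^sup>+\<xi>. G \<xi> \<partial>lborel) = (\<integral>\<^sup>+x. (\<integral>\<^sup>+w. G (x, w) \<partial>lborel) \<partial>lborel)"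
    by (rule nn_integral_prod_lborel) measurable
  also have "\<dots> = (\<integral>\<^sup>+x. (\<integral>\<^sup>+w. indicator {w. w \<bullet> bv \<in> {0..<1}} w *
        (\<integral>\<^sup>+s. G (x, w + s *\<^sub>R (axis i 1, - 2 * x $ i)) \<partial>lborel) \<partial>lborel) \<partial>lborel)"
  proof (rule nn_integral_cong)
    fix x :: "real ^ 'n"
    show "(\<integral>\<^sup>+w. G (x, w) \<partial>lborel) = (\<integral>\<^sup>+w. indicator {w. w \<bullet> bv \<in> {0..<1}} w *
        (\<integral>\<^sup>+s. G (x, w + s *\<^sub>R (axis i 1, - 2 * x $ i)) \<partial>lborel) \<partial>lborel)"
      by (rule slab_fubini) (measurable, simp add: bv_def inner_axis_axis)
  qed
  also have "\<dots> = (\<integral>\<^sup>+x. (\<integral>\<^sup>+w. indicator {\<xi>. fst (snd \<xi>) $ i \<in> {0..<1}} (x, w) * (\<integral>\<^sup>+s. G ((x, w) + s *\<^sub>R Yvf i (x, w)) \<partial>lborel) \<partial>lborel) \<partial>lborel)"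
    by (intro nn_integral_cong) (simp add: bv_def Yvf_def indicator_def inner_prod_def inner_axis)
  also have "\<dots> = (\<integral>\<^sup>+\<xi>. indicator {\<xi>. fst (snd \<xi>) $ i \<in> {0..<1}} \<xi> * (\<integral>\<^sup>+s. G (\<xi> + s *\<^sub>R Yvf i \<xi>) \<partial>lborel) \<partial>lborel)"
  proof (rule nn_integral_prod_lborel[symmetric])
    have m: "(\<lambda>x. \<integral>\<^sup>+s. G (x + s *\<^sub>R Yvf i x) \<partial>lborel) \<in> borel_measurable borel"
      by (rule line_int_meas) measurable
    show "(\<lambda>\<xi>. indicator {\<xi>. fst (snd \<xi>) $ i \<in> {0..<1}} \<xi> * (\<integral>\<^sup>+s. G (\<xi> + s *\<^sub>R Yvf i \<xi>) \<partial>lborel)) \<in> borel_measurable borel"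
    proof (rule borel_measurable_times_ennreal[OF _ m])
      have "{\<xi>::'n heis. fst (snd \<xi>) $ i \<in> {0..<1}} \<in> sets borel"
        by (rule coord_set_meas) (intro continuous_intros)
      then show "(\<lambda>\<xi>::'n heis. indicator {\<xi>. fst (snd \<xi>) $ i \<in> {0..<1}} \<xi> :: ennreal) \<in> borel_measurable borel"
        by (rule borel_measurable_indicator)
    qed
  qed
  finally show ?thesis .
qed

lemma meas_cont_comp:
  assumes "G \<in> borel_measurable borel" "continuous_on UNIV \<phi>"
  shows "(\<lambda>z. G (\<phi> z)) \<in> borel_measurable borel"
  by (rule measurable_compose[OF borel_measurable_continuous_onI[OF assms(2)] assms(1)])

lemma meas_pairL:
  fixes f :: "('a::euclidean_space \<times> 'b::euclidean_space) \<Rightarrow> ennreal"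
  shows "f \<in> borel_measurable borel \<Longrightarrow> f \<in> borel_measurable (lborel \<Otimes>\<^sub>M lborel)"
  by (simp add: lborel_prod)

lemma meas_pairB:
  fixes f :: "('a::euclidean_space \<times> 'b::euclidean_space) \<Rightarrow> ennreal"
  assumes "f \<in> borel_measurable borel"
  shows "f \<in> borel_measurable (borel \<Otimes>\<^sub>M lborel)"
proof -
  have "sets (borel \<Otimes>\<^sub>M lborel) = sets (borel \<Otimes>\<^sub>M (borel :: 'b measure))"
    by (rule sets_pair_measure_cong) auto
  also have "\<dots> = sets (borel :: ('a \<times> 'b) measure)" by (simp only: borel_prod)
  finally show ?thesis using assms measurable_cong_sets by blast
qed

lemma heis_swap:
  fixes G :: "'n::finite heis \<Rightarrow> ennreal"
  assumes G: "G \<in> borel_measurable borel"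
  shows "(\<integral>\<^sup>+\<xi>. G \<xi> \<partial>lborel) = (\<integral>\<^sup>+y. (\<integral>\<^sup>+v. G (fst v, y, snd v) \<partial>lborel) \<partial>lborel)"
proof -
  have "(\<integral>\<^sup>+\<xi>. G \<xi> \<partial>lborel) = (\<integral>\<^sup>+x. (\<integral>\<^sup>+w. G (x, w) \<partial>lborel) \<partial>lborel)"
    by (rule nn_integral_prod_lborel[OF G])
  also have "\<dots> = (\<integral>\<^sup>+x. (\<integral>\<^sup>+y. (\<integral>\<^sup>+t. G (x, y, t) \<partial>lborel) \<partial>lborel) \<partial>lborel)"
  proof (rule nn_integral_cong)
    fix x :: "real ^ 'n"
    have "(\<lambda>w. G (x, w)) \<in> borel_measurable borel"
      by (rule meas_cont_comp[OF G]) (intro continuous_intros)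
    then show "(\<integral>\<^sup>+w. G (x, w) \<partial>lborel) = (\<integral>\<^sup>+y. (\<integral>\<^sup>+t. G (x, y, t) \<partial>lborel) \<partial>lborel)"
      by (rule nn_integral_prod_lborel)
  qed
  also have "\<dots> = (\<integral>\<^sup>+y. (\<integral>\<^sup>+x. (\<integral>\<^sup>+t. G (x, y, t) \<partial>lborel) \<partial>lborel) \<partial>lborel)"
  proof (rule lborel_pair.Fubini'[symmetric])
    have "(\<lambda>(z, t). G (fst z, snd z, t)) \<in> borel_measurable (borel \<Otimes>\<^sub>M lborel)"
    proof (rule meas_pairB)
      have "(\<lambda>p. G (fst (fst p), snd (fst p), snd p)) \<in> borel_measurable borel"
        by (rule meas_cont_comp[OF G]) (intro continuous_intros)
      then show "(\<lambda>(z, t). G (fst z, snd z, t)) \<in> borel_measurable borel"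
        by (simp add: case_prod_beta')
    qed
    then have "(\<lambda>z. \<integral>\<^sup>+t. G (fst z, snd z, t) \<partial>lborel) \<in> borel_measurable borel"
      by (rule lborel.borel_measurable_nn_integral)
    then have "(\<lambda>z. \<integral>\<^sup>+t. G (fst z, snd z, t) \<partial>lborel) \<in> borel_measurable (lborel \<Otimes>\<^sub>M lborel)"
      by (rule meas_pairL)
    moreover have "(\<lambda>(x, y). \<integral>\<^sup>+t. G (x, y, t) \<partial>lborel) = (\<lambda>z. \<integral>\<^sup>+t. G (fst z, snd z, t) \<partial>lborel)"
      by (rule ext) (simp add: split_beta)
    ultimately show "(\<lambda>(x, y). \<integral>\<^sup>+t. G (x, y, t) \<partial>lborel) \<in> borel_measurable (lborel \<Otimes>\<^sub>M lborel)"
      by simp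
  qed
  also have "\<dots> = (\<integral>\<^sup>+y. (\<integral>\<^sup>+v. G (fst v, y, snd v) \<partial>lborel) \<partial>lborel)"
  proof (rule nn_integral_cong)
    fix y :: "real ^ 'n"
    have "(\<lambda>v. G (fst v, y, snd v)) \<in> borel_measurable borel"
      by (rule meas_cont_comp[OF G]) (intro continuous_intros)
    from nn_integral_prod_lborel[OF this]
    show "(\<integral>\<^sup>+x. (\<integral>\<^sup>+t. G (x, y, t) \<partial>lborel) \<partial>lborel) = (\<integral>\<^sup>+v. G (fst v, y, snd v) \<partial>lborel)"
      by simp
  qed
  finally show ?thesis .
qed

lemma heis_X_slab:
  fixes G :: "'n::finite heis \<Rightarrow> ennreal" and i :: 'n
  assumes G[measurable]: "G \<in> borel_measurable borel"
  shows "(\<integral>\<^sup>+\<xi>. G \<xi> \<partial>lborel)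
    = (\<integral>\<^sup>+\<xi>. indicator {\<xi>. fst \<xi> $ i \<in> {0..<1}} \<xi> * (\<integral>\<^sup>+s. G (\<xi> + s *\<^sub>R Xvf i \<xi>) \<partial>lborel) \<partial>lborel)"
proof -
  define bv :: "(real ^ 'n) \<times> real" where "bv = (axis i 1, 0)"
  define H where "H \<xi> = indicator {\<xi>. fst \<xi> $ i \<in> {0..<1}} \<xi> * (\<integral>\<^sup>+s. G (\<xi> + s *\<^sub>R Xvf i \<xi>) \<partial>lborel)" for \<xi> :: "'n heis"
  have Hm: "H \<in> borel_measurable borel"
    unfolding H_def[abs_def]
  proof (rule borel_measurable_times_ennreal)
    show "(\<lambda>x. \<integral>\<^sup>+s. G (x + s *\<^sub>R Xvf i x) \<partial>lborel) \<in> borel_measurable borel"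
      by (rule line_int_meas) measurable
    have "{\<xi>::'n heis. fst \<xi> $ i \<in> {0..<1}} \<in> sets borel"
      by (rule coord_set_meas) (intro continuous_intros)
    then show "(\<lambda>\<xi>::'n heis. indicator {\<xi>. fst \<xi> $ i \<in> {0..<1}} \<xi> :: ennreal) \<in> borel_measurable borel"
      by (rule borel_measurable_indicator)
  qed
  have "(\<integral>\<^sup>+\<xi>. G \<xi> \<partial>lborel) = (\<integral>\<^sup>+y. (\<integral>\<^sup>+v. G (fst v, y, snd v) \<partial>lborel) \<partial>lborel)"
    by (rule heis_swap[OF G])
  also have "\<dots> = (\<integral>\<^sup>+y. (\<integral>\<^sup>+v. H (fst v, y, snd v) \<partial>lborel) \<partial>lborel)"
  proof (rule nn_integral_cong)
    fix y :: "real ^ 'n"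
    have m: "(\<lambda>v. G (fst v, y, snd v)) \<in> borel_measurable borel"
      by (rule meas_cont_comp[OF G]) (intro continuous_intros)
    have "(\<integral>\<^sup>+v. G (fst v, y, snd v) \<partial>lborel) = (\<integral>\<^sup>+v. indicator {w. w \<bullet> bv \<in> {0..<1}} v *
        (\<integral>\<^sup>+s. G (fst (v + s *\<^sub>R (axis i 1, 2 * y $ i)), y, snd (v + s *\<^sub>R (axis i 1, 2 * y $ i))) \<partial>lborel) \<partial>lborel)"
      by (rule slab_fubini[OF m]) (simp add: bv_def inner_axis_axis)
    also have "\<dots> = (\<integral>\<^sup>+v. H (fst v, y, snd v) \<partial>lborel)"
      by (intro nn_integral_cong) (simp add: H_def bv_def Xvf_def indicator_def inner_prod_def inner_axis)
    finally show "(\<integral>\<^sup>+v. G (fst v, y, snd v) \<partial>lborel) = (\<integral>\<^sup>+v. H (fst v, y, snd v) \<partial>lborel)" .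
  qed
  also have "\<dots> = (\<integral>\<^sup>+\<xi>. H \<xi> \<partial>lborel)"
    by (rule heis_swap[OF Hm, symmetric])
  finally show ?thesis unfolding H_def .
qed

lemma C0_facts:
  fixes u :: "'a::euclidean_space \<Rightarrow> real"
  assumes "u \<in> C0_inf U"
  shows "continuous_on UNIV u"
    and "\<And>x. (u has_derivative frechet_derivative u (at x)) (at x)"
    and "\<And>v. continuous_on UNIV (\<lambda>x. frechet_derivative u (at x) v)"
    and "compact (closure {x. u x \<noteq> 0})"
    and "closure {x. u x \<noteq> 0} \<subseteq> U"
proof -
  have sm: "smooth u" and cp: "compact (closure {x. u x \<noteq> 0})" and sub: "closure {x. u x \<noteq> 0} \<subseteq> U"
    using assms by (auto simp: C0_inf_def)
  have c0: "Ck 0 u" and c1: "Ck (Suc 0) u" using sm by (auto simp: smooth_def)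
  show "continuous_on UNIV u" using c0 by simp
  show "(u has_derivative frechet_derivative u (at x)) (at x)" for x
  proof -
    have "u differentiable_on UNIV" using c1 by simp
    then have "u differentiable (at x)" by (simp add: differentiable_on_def)
    then show ?thesis by (simp add: frechet_derivative_works)
  qed
  show "continuous_on UNIV (\<lambda>x. frechet_derivative u (at x) v)" for v
    using c1 by simp
  show "compact (closure {x. u x \<noteq> 0})" by (fact cp)
  show "closure {x. u x \<noteq> 0} \<subseteq> U" by (fact sub)
qed

lemma Du_cont:
  fixes u :: "'a::euclidean_space \<Rightarrow> real"
  assumes D: "\<And>x. (u has_derivative frechet_derivative u (at x)) (at x)"
    and Dc: "\<And>v. continuous_on UNIV (\<lambda>x. frechet_derivative u (at x) v)"
    and V: "continuous_on UNIV V"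
  shows "continuous_on UNIV (\<lambda>x. frechet_derivative u (at x) (V x))"
proof -
  have eq: "frechet_derivative u (at x) (V x) = (\<Sum>i\<in>Basis. (V x \<bullet> i) * frechet_derivative u (at x) i)" for x
  proof -
    have lin: "linear (frechet_derivative u (at x))" using D[of x] by (rule has_derivative_linear)
    from Linear_Algebra.linear_componentwise[OF lin, of "V x" 1] show ?thesis by simp
  qed
  show ?thesis unfolding eq
    by (intro continuous_intros Dc V)
qed

lemma Du_zero:
  fixes u :: "'a::euclidean_space \<Rightarrow> real"
  assumes "x \<notin> closure {x. u x \<noteq> 0}"
  shows "frechet_derivative u (at x) v = 0"
proof -
  have "((\<lambda>_. 0) has_derivative (\<lambda>_. 0)) (at x)" by simp
  then have "(u has_derivative (\<lambda>_. 0)) (at x)"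
  proof (rule has_derivative_transform_within_open)
    show "open (- closure {x. u x \<noteq> 0})" by (intro open_Compl closed_closure)
    show "x \<in> - closure {x. u x \<noteq> 0}" using assms by simp
    show "0 = u y" if "y \<in> - closure {x. u x \<noteq> 0}" for y
      using that closure_subset by force
  qed
  then have "(\<lambda>_. 0) = frechet_derivative u (at x)" by (rule frechet_derivative_at)
  then show ?thesis by (metis)
qed

lemma infdist_halfspace:
  fixes \<nu> :: "'a::euclidean_space"
  assumes n: "norm \<nu> = 1" and x: "x \<in> halfspace \<nu> d"
  shows "infdist x (frontier (halfspace \<nu> d)) = inner x \<nu> - d"
proof -
  have fr: "frontier (halfspace \<nu> d) = {y. inner y \<nu> = d}"
  proof -
    have "\<nu> \<noteq> 0" using n by auto
    then have "frontier {y. \<nu> \<bullet> y > d} = {y. \<nu> \<bullet> y = d}" by (intro frontier_halfspace_gt) auto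
    then show ?thesis by (simp add: halfspace_def inner_commute)
  qed
  have nn: "\<nu> \<bullet> \<nu> = 1" using n by (simp add: norm_eq_1)
  define y where "y = x - (inner x \<nu> - d) *\<^sub>R \<nu>"
  have y: "inner y \<nu> = d" by (simp add: y_def inner_diff_left nn)
  have pos: "inner x \<nu> - d > 0" using x by (simp add: halfspace_def)
  have "infdist x {y. inner y \<nu> = d} \<le> dist x y"
    using y by (intro infdist_le) auto
  also have "dist x y = inner x \<nu> - d" using pos n by (simp add: y_def dist_norm)
  finally have le: "infdist x {y. inner y \<nu> = d} \<le> inner x \<nu> - d" .
  have ge: "inner x \<nu> - d \<le> infdist x {y. inner y \<nu> = d}"
  proof -
    have "inner x \<nu> - d \<le> dist x z" if "inner z \<nu> = d" for z
    proof -
      have "inner x \<nu> - d = inner (x - z) \<nu>" using that by (simp add: inner_diff_left)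
      also have "\<dots> \<le> norm (x - z) * norm \<nu>" by (rule norm_cauchy_schwarz)
      finally show ?thesis using n by (simp add: dist_norm)
    qed
    moreover have "{y. inner y \<nu> = d} \<noteq> {}" using y by auto
    ultimately show ?thesis
      by (simp add: infdist_notempty) (rule cINF_greatest, auto)
  qed
  show ?thesis using le ge fr by simp
qed

lemma main_generic:
  fixes \<nu> :: "'a::euclidean_space" and u :: "'a \<Rightarrow> real" and V :: "'a \<Rightarrow> 'a" and S :: "'a set"
    and d p :: real
  assumes n: "norm \<nu> = 1" and p: "p > 1" and u: "u \<in> C0_inf (halfspace \<nu> d)"
    and Vc: "continuous_on UNIV V"
    and Vconst: "\<And>\<xi> s. V (\<xi> + s *\<^sub>R V \<xi>) = V \<xi>"
    and Vn: "\<And>\<xi>. norm (V \<xi>) \<ge> 1"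
    and slab: "\<And>G. G \<in> borel_measurable borel \<Longrightarrow>
        (\<integral>\<^sup>+\<xi>. G \<xi> \<partial>lborel) = (\<integral>\<^sup>+\<xi>. indicator S \<xi> * (\<integral>\<^sup>+s. G (\<xi> + s *\<^sub>R V \<xi>) \<partial>lborel) \<partial>lborel)"
    and Sm: "S \<in> sets borel"
  shows "((p - 1) / p) powr p *
           (LINT \<xi>:halfspace \<nu> d|lborel.
              \<bar>inner (V \<xi>) \<nu>\<bar> powr p / infdist \<xi> (frontier (halfspace \<nu> d)) powr p
              * \<bar>u \<xi>\<bar> powr p)
         \<le> (LINT \<xi>:halfspace \<nu> d|lborel. \<bar>vf_apply V u \<xi>\<bar> powr p)"
proof -
  define H where "H = halfspace \<nu> d"
  define K where "K = closure {x. u x \<noteq> 0}"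
  define Du where "Du \<xi> = frechet_derivative u (at \<xi>) (V \<xi>)" for \<xi>
  define t where "t = (p - 1) / p"
  have t0: "t > 0" using p by (simp add: t_def)
  note uf = C0_facts[OF u]
  have uc: "continuous_on UNIV u" by (fact uf(1))
  have uD: "(u has_derivative frechet_derivative u (at x)) (at x)" for x by (fact uf(2))
  have uDc: "continuous_on UNIV (\<lambda>x. frechet_derivative u (at x) v)" for v by (fact uf(3))
  have Kc: "compact K" using uf(4) by (simp add: K_def)
  have KH: "K \<subseteq> H" using uf(5) by (simp add: K_def H_def)
  have Duc: "continuous_on UNIV Du"
    unfolding Du_def[abs_def] by (rule Du_cont[OF uD uDc Vc])
  have Du0: "Du \<xi> = 0" if "\<xi> \<notin> K" for \<xi>
    using that unfolding Du_def K_def by (rule Du_zero)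
  have Hopen: "open H" unfolding H_def halfspace_def by (simp add: open_Collect_less continuous_on_inner)
  define Lf where "Lf \<xi> = indicator H \<xi> * (\<bar>inner (V \<xi>) \<nu>\<bar> powr p / infdist \<xi> (frontier H) powr p * \<bar>u \<xi>\<bar> powr p)" for \<xi>
  define Rf where "Rf \<xi> = indicator H \<xi> * \<bar>Du \<xi>\<bar> powr p" for \<xi>
  have [measurable]: "u \<in> borel_measurable borel" using uc by (rule borel_measurable_continuous_onI)
  have [measurable]: "Du \<in> borel_measurable borel" using Duc by (rule borel_measurable_continuous_onI)
  have [measurable]: "V \<in> borel_measurable borel" using Vc by (rule borel_measurable_continuous_onI)
  have [measurable]: "(\<lambda>\<xi>. infdist \<xi> (frontier H)) \<in> borel_measurable borel"
    by (rule borel_measurable_continuous_onI) (intro continuous_intros)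
  have [measurable]: "H \<in> sets borel" using Hopen by simp
  have Lm[measurable]: "Lf \<in> borel_measurable borel" unfolding Lf_def[abs_def] by measurable
  have Rm[measurable]: "Rf \<in> borel_measurable borel" unfolding Rf_def[abs_def] by measurable
  have LINTL: "(LINT \<xi>:halfspace \<nu> d|lborel. \<bar>inner (V \<xi>) \<nu>\<bar> powr p / infdist \<xi> (frontier (halfspace \<nu> d)) powr p * \<bar>u \<xi>\<bar> powr p)
      = enn2real (\<integral>\<^sup>+\<xi>. ennreal (Lf \<xi>) \<partial>lborel)"
  proof -
    have "(LINT \<xi>:halfspace \<nu> d|lborel. \<bar>inner (V \<xi>) \<nu>\<bar> powr p / infdist \<xi> (frontier (halfspace \<nu> d)) powr p * \<bar>u \<xi>\<bar> powr p)
        = integral\<^sup>L lborel Lf"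
      by (simp add: set_lebesgue_integral_def Lf_def[abs_def] H_def)
    also have "\<dots> = enn2real (\<integral>\<^sup>+\<xi>. ennreal (Lf \<xi>) \<partial>lborel)"
      by (rule integral_eq_nn_integral) (auto simp: Lf_def)
    finally show ?thesis .
  qed
  have LINTR: "(LINT \<xi>:halfspace \<nu> d|lborel. \<bar>vf_apply V u \<xi>\<bar> powr p) = enn2real (\<integral>\<^sup>+\<xi>. ennreal (Rf \<xi>) \<partial>lborel)"
  proof -
    have "(LINT \<xi>:halfspace \<nu> d|lborel. \<bar>vf_apply V u \<xi>\<bar> powr p) = integral\<^sup>L lborel Rf"
      by (simp add: set_lebesgue_integral_def Rf_def[abs_def] H_def vf_apply_def Du_def)
    also have "\<dots> = enn2real (\<integral>\<^sup>+\<xi>. ennreal (Rf \<xi>) \<partial>lborel)"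
      by (rule integral_eq_nn_integral) (auto simp: Rf_def)
    finally show ?thesis .
  qed
  have Rfin: "(\<integral>\<^sup>+\<xi>. ennreal (Rf \<xi>) \<partial>lborel) < \<infinity>"
  proof -
    have "compact (Du ` K)" using Kc Duc by (intro compact_continuous_image continuous_on_subset[OF Duc]) auto
    then have "bounded (Du ` K)" by (rule compact_imp_bounded)
    then obtain B0 where "\<forall>x\<in>Du ` K. norm x \<le> B0" unfolding bounded_iff by blast
    then have B: "\<And>\<xi>. \<xi> \<in> K \<Longrightarrow> \<bar>Du \<xi>\<bar> \<le> B0" by auto
    define M where "M = (max B0 0) powr p"
    have Kb: "K \<in> sets borel" unfolding K_def by simp
    have "(\<integral>\<^sup>+\<xi>. ennreal (Rf \<xi>) \<partial>lborel) \<le> (\<integral>\<^sup>+\<xi>. ennreal M * indicator K \<xi> \<partial>lborel)"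
    proof (rule nn_integral_mono)
      fix \<xi>
      show "ennreal (Rf \<xi>) \<le> ennreal M * indicator K \<xi>"
      proof (cases "\<xi> \<in> K")
        case True
        have "Rf \<xi> \<le> 1 * \<bar>Du \<xi>\<bar> powr p" unfolding Rf_def
          by (intro mult_right_mono) (auto simp: indicator_def)
        also have "\<dots> \<le> M" unfolding M_def using B[OF True] p
          by (simp add: powr_mono2)
        finally show ?thesis using True by (simp add: ennreal_leI)
      next
        case False then show ?thesis using Du0[OF False] p by (simp add: Rf_def)
      qed
    qed
    also have "\<dots> = ennreal M * emeasure lborel K"
      using Kb by (intro nn_integral_cmult_indicator) simp
    also have "\<dots> < \<infinity>" using emeasure_compact_finite[OF Kc] by (simp add: ennreal_mult_less_top)
    finally show ?thesis .
  qed
  obtain \<epsilon> where eps0: "\<epsilon> > 0" and epsK: "\<And>\<xi>. \<xi> \<in> K \<Longrightarrow> \<epsilon> \<le> inner \<xi> \<nu> - d"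
  proof (cases "K = {}")
    case True then show ?thesis using that[of 1] by auto
  next
    case False
    have "continuous_on K (\<lambda>\<xi>. inner \<xi> \<nu> - d)" by (intro continuous_intros)
    from continuous_attains_inf[OF Kc False this] obtain x where x: "x \<in> K"
      and xm: "\<And>y. y \<in> K \<Longrightarrow> inner x \<nu> - d \<le> inner y \<nu> - d" by auto
    have "inner x \<nu> - d > 0" using KH x by (auto simp: H_def halfspace_def)
    then show ?thesis using that[of "inner x \<nu> - d"] xm by auto
  qed
  obtain R0 where R0: "\<And>\<xi>. \<xi> \<in> K \<Longrightarrow> norm \<xi> \<le> R0"
    using compact_imp_bounded[OF Kc] unfolding bounded_iff by auto
  have pw: "ennreal (t powr p) * (\<integral>\<^sup>+s. ennreal (Lf (\<xi>0 + s *\<^sub>R V \<xi>0)) \<partial>lborel)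
      \<le> (\<integral>\<^sup>+s. ennreal (Rf (\<xi>0 + s *\<^sub>R V \<xi>0)) \<partial>lborel)" for \<xi>0
  proof -
    define w where "w = V \<xi>0"
    define c where "c = inner w \<nu>"
    define e0 where "e0 = inner \<xi>0 \<nu> - d"
    define f where "f s = u (\<xi>0 + s *\<^sub>R w)" for s
    define f' where "f' s = frechet_derivative u (at (\<xi>0 + s *\<^sub>R w)) w" for s
    have Vl: "V (\<xi>0 + s *\<^sub>R w) = w" for s unfolding w_def by (rule Vconst)
    have wn: "norm w \<ge> 1" unfolding w_def by (rule Vn)
    have inner_l: "inner (\<xi>0 + s *\<^sub>R w) \<nu> - d = e0 + c * s" for s
      by (simp add: e0_def c_def inner_add_left algebra_simps)
    have inH: "(\<xi>0 + s *\<^sub>R w \<in> H) = (0 < e0 + c * s)" for s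
      using inner_l[of s] unfolding H_def halfspace_def by (simp del: inner_add_left) linarith
    have Leq: "Lf (\<xi>0 + s *\<^sub>R w) = indicator {s. 0 < e0 + c * s} s *
        (\<bar>c\<bar> powr p / (e0 + c * s) powr p * \<bar>f s\<bar> powr p)" for s
    proof (cases "\<xi>0 + s *\<^sub>R w \<in> H")
      case True
      then have "infdist (\<xi>0 + s *\<^sub>R w) (frontier H) = e0 + c * s"
        using infdist_halfspace[OF n, of "\<xi>0 + s *\<^sub>R w" d] inner_l[of s] by (simp add: H_def)
      then show ?thesis using True inH[of s] by (simp add: Lf_def Vl f_def c_def)
    next
      case False then show ?thesis using inH[of s] by (simp add: Lf_def)
    qed
    have Req: "Rf (\<xi>0 + s *\<^sub>R w) = indicator {s. 0 < e0 + c * s} s * \<bar>f' s\<bar> powr p" for s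
      using inH[of s] by (simp add: Rf_def Du_def Vl f'_def indicator_def)
    show ?thesis
    proof (cases "c = 0")
      case True
      then have "Lf (\<xi>0 + s *\<^sub>R w) = 0" for s using Leq[of s] by simp
      then show ?thesis by (simp add: w_def[symmetric])
    next
      case cne: False
      define M where "M = R0 + norm \<xi>0 + 1"
      have fnz: "\<epsilon> \<le> e0 + c * s \<and> \<bar>s\<bar> < M" if "f s \<noteq> 0" for s
      proof -
        have inK: "\<xi>0 + s *\<^sub>R w \<in> K" using that closure_subset by (force simp: K_def f_def)
        have "\<epsilon> \<le> e0 + c * s" using epsK[OF inK] inner_l[of s] by simp
        moreover have "\<bar>s\<bar> < M"
        proof -
          have "\<bar>s\<bar> \<le> \<bar>s\<bar> * norm w" using wn by (simp add: mult_le_cancel_left1)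
          also have "\<dots> = norm ((\<xi>0 + s *\<^sub>R w) - \<xi>0)" by simp
          also have "\<dots> \<le> norm (\<xi>0 + s *\<^sub>R w) + norm \<xi>0" by (rule norm_triangle_ineq4)
          also have "\<dots> \<le> R0 + norm \<xi>0" using R0[OF inK] by simp
          finally show ?thesis by (simp add: M_def)
        qed
        ultimately show ?thesis by simp
      qed
      obtain a b where ab: "a \<le> b" and gpos: "\<And>s. s \<in> {a..b} \<Longrightarrow> 0 < e0 + c * s"
        and fz: "\<And>s. s \<le> a \<or> b \<le> s \<Longrightarrow> f s = 0"
      proof (cases "c > 0")
        case True
        define a where "a = (\<epsilon>/2 - e0) / c"
        have ca: "c * a = \<epsilon>/2 - e0" using True by (simp add: a_def)
        show ?thesis
        proof (rule that[of a "max a M"])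
          show "a \<le> max a M" by simp
          show "0 < e0 + c * s" if "s \<in> {a..max a M}" for s
          proof -
            have "c * a \<le> c * s" using that True by (intro mult_left_mono) auto
            then show ?thesis using ca eps0 by linarith
          qed
          show "f s = 0" if "s \<le> a \<or> max a M \<le> s" for s
          proof (rule ccontr)
            assume "f s \<noteq> 0"
            from fnz[OF this] have h: "\<epsilon> \<le> e0 + c * s" "\<bar>s\<bar> < M" by auto
            show False
            proof (cases "s \<le> a")
              case True
              then have "c * s \<le> c * a" using \<open>c > 0\<close> by (intro mult_left_mono) auto
              then show False using h ca eps0 by linarith
            next
              case False then show False using that h by auto
            qed
          qed
        qed
      next
        case False
        then have cn: "c < 0" using cne by simp
        define b where "b = (\<epsilon>/2 - e0) / c"
        have cb: "c * b = \<epsilon>/2 - e0" using cn by (simp add: b_def)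
        show ?thesis
        proof (rule that[of "min b (-M)" b])
          show "min b (-M) \<le> b" by simp
          show "0 < e0 + c * s" if "s \<in> {min b (-M)..b}" for s
          proof -
            have "c * b \<le> c * s" using that cn by (intro mult_left_mono_neg) auto
            then show ?thesis using cb eps0 by linarith
          qed
          show "f s = 0" if "s \<le> min b (-M) \<or> b \<le> s" for s
          proof (rule ccontr)
            assume "f s \<noteq> 0"
            from fnz[OF this] have h: "\<epsilon> \<le> e0 + c * s" "\<bar>s\<bar> < M" by auto
            show False
            proof (cases "b \<le> s")
              case True
              then have "c * s \<le> c * b" using cn by (intro mult_left_mono_neg) auto
              then show False using h cb eps0 by linarith
            next
              case False then show False using that h by auto
            qed
          qed
        qed
      qed
      have fd: "(f has_real_derivative f' s) (at s)" for s
      proof -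
        have l: "((\<lambda>s. \<xi>0 + s *\<^sub>R w) has_derivative (\<lambda>h. h *\<^sub>R w)) (at s)"
          by (auto intro!: derivative_eq_intros)
        have lin: "linear (frechet_derivative u (at (\<xi>0 + s *\<^sub>R w)))"
          using uD by (rule has_derivative_linear)
        from diff_chain_at[OF l uD]
        have "(f has_derivative (frechet_derivative u (at (\<xi>0 + s *\<^sub>R w)) \<circ> (\<lambda>h. h *\<^sub>R w))) (at s)"
          by (simp add: f_def[abs_def] o_def)
        moreover have "(frechet_derivative u (at (\<xi>0 + s *\<^sub>R w)) \<circ> (\<lambda>h. h *\<^sub>R w)) = (*) (f' s)"
          by (rule ext) (simp add: linear_cmul[OF lin] f'_def)
        ultimately show ?thesis by (simp add: has_field_derivative_def)
      qed
      have fc: "continuous_on UNIV f'"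
        unfolding f'_def
        by (rule continuous_on_compose2[OF uDc[of w]]) (auto intro!: continuous_intros)
      from hardy_line[OF p ab gpos fz fd fc]
      show ?thesis
        by (simp add: Leq Req w_def[symmetric] t_def)
    qed
  qed
  have ILm: "(\<lambda>x. \<integral>\<^sup>+s. ennreal (Lf (x + s *\<^sub>R V x)) \<partial>lborel) \<in> borel_measurable borel"
    by (rule line_int_meas) measurable
  have "ennreal (t powr p) * (\<integral>\<^sup>+\<xi>. ennreal (Lf \<xi>) \<partial>lborel)
      = ennreal (t powr p) * (\<integral>\<^sup>+\<xi>. indicator S \<xi> * (\<integral>\<^sup>+s. ennreal (Lf (\<xi> + s *\<^sub>R V \<xi>)) \<partial>lborel) \<partial>lborel)"
    by (subst slab) measurable
  also have "\<dots> = (\<integral>\<^sup>+\<xi>. ennreal (t powr p) * (indicator S \<xi> * (\<integral>\<^sup>+s. ennreal (Lf (\<xi> + s *\<^sub>R V \<xi>)) \<partial>lborel)) \<partial>lborel)"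
    by (rule nn_integral_cmult[symmetric]) (intro borel_measurable_times_ennreal borel_measurable_indicator; use Sm ILm in simp)
  also have "\<dots> \<le> (\<integral>\<^sup>+\<xi>. indicator S \<xi> * (\<integral>\<^sup>+s. ennreal (Rf (\<xi> + s *\<^sub>R V \<xi>)) \<partial>lborel) \<partial>lborel)"
  proof (rule nn_integral_mono)
    fix \<xi>
    have "ennreal (t powr p) * (indicator S \<xi> * (\<integral>\<^sup>+s. ennreal (Lf (\<xi> + s *\<^sub>R V \<xi>)) \<partial>lborel))
       = indicator S \<xi> * (ennreal (t powr p) * (\<integral>\<^sup>+s. ennreal (Lf (\<xi> + s *\<^sub>R V \<xi>)) \<partial>lborel))"
      by (simp add: mult_ac)
    also have "\<dots> \<le> indicator S \<xi> * (\<integral>\<^sup>+s. ennreal (Rf (\<xi> + s *\<^sub>R V \<xi>)) \<partial>lborel)"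
      by (intro mult_left_mono pw) auto
    finally show "ennreal (t powr p) * (indicator S \<xi> * (\<integral>\<^sup>+s. ennreal (Lf (\<xi> + s *\<^sub>R V \<xi>)) \<partial>lborel))
       \<le> indicator S \<xi> * (\<integral>\<^sup>+s. ennreal (Rf (\<xi> + s *\<^sub>R V \<xi>)) \<partial>lborel)" .
  qed
  also have "\<dots> = (\<integral>\<^sup>+\<xi>. ennreal (Rf \<xi>) \<partial>lborel)"
    by (subst slab[of "\<lambda>\<xi>. ennreal (Rf \<xi>)"]) (use Rm in auto)
  finally have main: "ennreal (t powr p) * (\<integral>\<^sup>+\<xi>. ennreal (Lf \<xi>) \<partial>lborel) \<le> (\<integral>\<^sup>+\<xi>. ennreal (Rf \<xi>) \<partial>lborel)" .
  have "t powr p * enn2real (\<integral>\<^sup>+\<xi>. ennreal (Lf \<xi>) \<partial>lborel)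
      = enn2real (ennreal (t powr p) * (\<integral>\<^sup>+\<xi>. ennreal (Lf \<xi>) \<partial>lborel))"
    by (simp add: enn2real_mult)
  also have "\<dots> \<le> enn2real (\<integral>\<^sup>+\<xi>. ennreal (Rf \<xi>) \<partial>lborel)"
    using main Rfin by (intro enn2real_mono) auto
  finally show ?thesis unfolding LINTL LINTR t_def .
qed

lemma Xvf_const: "Xvf i (\<xi> + s *\<^sub>R Xvf i \<xi>) = Xvf i \<xi>"
  by (simp add: Xvf_def)

lemma Yvf_const: "Yvf i (\<xi> + s *\<^sub>R Yvf i \<xi>) = Yvf i \<xi>"
  by (simp add: Yvf_def)

lemma nfst_le: "norm (fst x) \<le> norm (x :: 'a::real_normed_vector \<times> 'b::real_normed_vector)"
  unfolding norm_prod_def by (rule real_sqrt_sum_squares_ge1)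

lemma nsnd_le: "norm (snd x) \<le> norm (x :: 'a::real_normed_vector \<times> 'b::real_normed_vector)"
  unfolding norm_prod_def by (rule real_sqrt_sum_squares_ge2)

lemma Xvf_norm: "norm (Xvf i \<xi>) \<ge> 1"
proof -
  have "norm (fst (Xvf i \<xi>)) \<le> norm (Xvf i \<xi>)" by (rule nfst_le)
  then show ?thesis by (simp add: Xvf_def)
qed

lemma Yvf_norm: "norm (Yvf i \<xi>) \<ge> 1"
proof -
  have "norm (fst (snd (Yvf i \<xi>))) \<le> norm (snd (Yvf i \<xi>))" by (rule nfst_le)
  also have "\<dots> \<le> norm (Yvf i \<xi>)" by (rule nsnd_le)
  finally show ?thesis by (simp add: Yvf_def)
qed

theorem mainTheorem5:
  fixes \<nu> :: "'n::finite heis" and d p :: real and i :: 'n and u :: "'n heis \<Rightarrow> real"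
  assumes "norm \<nu> = 1"
    and "p > 1"
    and "u \<in> C0_inf (halfspace \<nu> d)"
  shows "((p - 1) / p) powr p *
           (LINT \<xi>:halfspace \<nu> d|lborel.
              \<bar>inner (Xvf i \<xi>) \<nu>\<bar> powr p / infdist \<xi> (frontier (halfspace \<nu> d)) powr p
              * \<bar>u \<xi>\<bar> powr p)
         \<le> (LINT \<xi>:halfspace \<nu> d|lborel. \<bar>vf_apply (Xvf i) u \<xi>\<bar> powr p)
       \<and> ((p - 1) / p) powr p *
           (LINT \<xi>:halfspace \<nu> d|lborel.
              \<bar>inner (Yvf i \<xi>) \<nu>\<bar> powr p / infdist \<xi> (frontier (halfspace \<nu> d)) powr p
              * \<bar>u \<xi>\<bar> powr p)
         \<le> (LINT \<xi>:halfspace \<nu> d|lborel. \<bar>vf_apply (Yvf i) u \<xi>\<bar> powr p)"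
proof
  show "((p - 1) / p) powr p *
           (LINT \<xi>:halfspace \<nu> d|lborel.
              \<bar>inner (Xvf i \<xi>) \<nu>\<bar> powr p / infdist \<xi> (frontier (halfspace \<nu> d)) powr p
              * \<bar>u \<xi>\<bar> powr p)
         \<le> (LINT \<xi>:halfspace \<nu> d|lborel. \<bar>vf_apply (Xvf i) u \<xi>\<bar> powr p)"
  proof (rule main_generic[OF assms Xvf_cont Xvf_const Xvf_norm])
    show "(\<integral>\<^sup>+\<xi>. G \<xi> \<partial>lborel) = (\<integral>\<^sup>+\<xi>. indicator {\<xi>. fst \<xi> $ i \<in> {0..<1}} \<xi> * (\<integral>\<^sup>+s. G (\<xi> + s *\<^sub>R Xvf i \<xi>) \<partial>lborel) \<partial>lborel)"
      if "G \<in> borel_measurable borel" for G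
      using that by (rule heis_X_slab)
    show "{\<xi>::'n heis. fst \<xi> $ i \<in> {0..<1}} \<in> sets borel"
      by (rule coord_set_meas) (intro continuous_intros)
  qed
  show "((p - 1) / p) powr p *
           (LINT \<xi>:halfspace \<nu> d|lborel.
              \<bar>inner (Yvf i \<xi>) \<nu>\<bar> powr p / infdist \<xi> (frontier (halfspace \<nu> d)) powr p
              * \<bar>u \<xi>\<bar> powr p)
         \<le> (LINT \<xi>:halfspace \<nu> d|lborel. \<bar>vf_apply (Yvf i) u \<xi>\<bar> powr p)"
  proof (rule main_generic[OF assms Yvf_cont Yvf_const Yvf_norm])
    show "(\<integral>\<^sup>+\<xi>. G \<xi> \<partial>lborel) = (\<integral>\<^sup>+\<xi>. indicator {\<xi>. fst (snd \<xi>) $ i \<in> {0..<1}} \<xi> * (\<integral>\<^sup>+s. G (\<xi> + s *\<^sub>R Yvf i \<xi>) \<partial>lborel) \<partial>lborel)"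
      if "G \<in> borel_measurable borel" for G
      using that by (rule heis_Y_slab)
    show "{\<xi>::'n heis. fst (snd \<xi>) $ i \<in> {0..<1}} \<in> sets borel"
      by (rule coord_set_meas) (intro continuous_intros)
  qed
qed

end
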